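(* There is an absolute constant $C$ such that for every integer $r\ge 10$ there exists an integer $d\le C r^4\log r$ (i.e. $d\in O(r^4\log r)$) such that the following holds for every integer $k\ge 1$. Let $G$ be a $k\times k$ pseudogrid with grid-partition $\mathcal{P}:=\{V(P_\mu):\mu\in\mathrm{VE}(G_k)\}$ and let $\varphi$ be a vertex colouring of $G$ such that for every $A\subseteq\varphi(V(G))$, $|\varphi_{\mathcal{P}}^{-1}(A)\cap\mathrm{VE}(\mathrm{int}_r(G_k))|\ge d|A|$. Then there exists $S\subseteq\mathrm{int}_r(G)$ such that (i) $|\varphi^{-1}(\alpha)\cap S|=2$ for each $\alpha\in\varphi(V(G))$; and (ii) $|\tilde{B}_r(v)\cap S|\le 2$ for each $v\in S$.
   Context: The grid $G_k$ has vertex set $\{1,\dots,k\}^2$, with $(i_1,j_1)$ and $(i_2,j_2)$ adjacent iff $|i_1-i_2|+|j_1-j_2|=1$. For a graph $H$, $\mathrm{VE}(H):=V(H)\cup E(H)$. A $k\times k$ pseudogrid is any graph obtained from $G_k$ as follows: each edge $vw$ is replaced by a path $\overline{P}_{vw}$ with endpoints $v,w$ (subdividing $vw$ zero or more times); each vertex $v=(i,j)$ of degree $4$ is replaced by a nonempty path $P_v$: if $P_v$ has one vertex it plays the role of $v$; otherwise its endpoints $p,q$ are attached, $p$ to the paths $\overline{P}_{vw}$ towards two of the grid neighbours of $v$ and $q$ to the other two, in one of the patterns (Q1) $p$: $(i-1,j),(i,j-1)$, $q$: $(i+1,j),(i,j+1)$; (Q2) $p$: $(i,j+1),(i-1,j)$,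 $q$: $(i,j-1),(i+1,j)$; (Q3) $p$: $(i-1,j),(i+1,j)$, $q$: $(i,j-1),(i,j+1)$. For each grid edge $vw$, $P_{vw}$ is the (possibly empty) path of internal vertices of $\overline{P}_{vw}$; for each grid vertex $v$ of degree less than $4$, $P_v$ is the one-vertex path on $v$; $\{V(P_\mu):\mu\in\mathrm{VE}(G_k)\}$ is the grid-partition. $\mathrm{int}_r(G_k)$ is the subgraph of $G_k$ induced on $\{1+r,\dots,k-r\}^2$, and $\mathrm{int}_r(G):=\bigcup_{\mu\in\mathrm{VE}(\mathrm{int}_r(G_k))}V(P_\mu)$. Boxes: for a vertex $v=(i,j)$ of $G_k$, $B_r(v):=(\{i-r,\dots,i+r\}\times\{j-r,\dots,j+r\})\cap V(G_k)$; for an edge $vw$, $B_r(vw):=B_r(v)\cup B_r(w)$; $G_r(\mu):=G_k[B_r(\mu)]$; $\tilde{B}_r(\mu):=\bigcup_{\nu\in\mathrm{VE}(G_r(\mu))}V(P_\nu)$; for $v\in V(G)$, $\tilde{B}_r(v):=\tilde{B}_r(\mu_v)$ where $\mu_v$ is the unique object with $v\in V(P_{\mu_v})$. For a vertex colouring $\varphi$: $\varphi(V(G))$ is the set of colours used; $\varphi^{-1}(\alpha):=\{v\in V(G):\varphi(v)=\alpha\}$; $\varphi_{\mathcal{P}}(\mu):=\{\varphi(v):v\in V(P_\mu)\}$; $\varphi_{\mathcal{P}}^{-1}(A):=\{\mu\in\mathrm{VE}(G_k):A\cap\varphi_{\mathcal{P}}(\mu)\neq\emptyset\}$. *)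

theory Defs
  imports Complex_Main
begin

type_synonym gvert = "nat \<times> nat"

definition grid :: "nat \<Rightarrow> gvert set" where
  "grid k = {1..k} \<times> {1..k}"

definition gadj :: "gvert \<Rightarrow> gvert \<Rightarrow> bool" where
  "gadj v w \<longleftrightarrow> (let (i1,j1) = v; (i2,j2) = w in
      \<bar>int i1 - int i2\<bar> + \<bar>int j1 - int j2\<bar> = 1)"

definition gdeg :: "nat \<Rightarrow> gvert \<Rightarrow> nat" where
  "gdeg k v = card {w \<in> grid k. gadj v w}"

text \<open>Objects of VE(G_k): grid vertices and grid edges. A grid edge is stored
  once, oriented from (i,j) to its right/lower neighbour (i+1,j) or (i,j+1).\<close>
datatype gobj = GVert gvert | GEdge gvert gvert

definition fwd :: "gvert \<Rightarrow> gvert \<Rightarrow> bool" where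
  "fwd v w \<longleftrightarrow> w = (fst v + 1, snd v) \<or> w = (fst v, snd v + 1)"

definition VEsub :: "gvert set \<Rightarrow> gobj set" where
  "VEsub X = GVert ` X \<union> {GEdge v w | v w. v \<in> X \<and> w \<in> X \<and> fwd v w}"

definition VE :: "nat \<Rightarrow> gobj set" where
  "VE k = VEsub (grid k)"

definition intbox :: "nat \<Rightarrow> nat \<Rightarrow> gvert set" where
  "intbox k r = {1+r..k-r} \<times> {1+r..k-r}"

definition boxv :: "nat \<Rightarrow> nat \<Rightarrow> gvert \<Rightarrow> gvert set" where
  "boxv k r v = ({fst v - r..fst v + r} \<times> {snd v - r..snd v + r}) \<inter> grid k"

fun box :: "nat \<Rightarrow> nat \<Rightarrow> gobj \<Rightarrow> gvert set" where
  "box k r (GVert v) = boxv k r v"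
| "box k r (GEdge v w) = boxv k r v \<union> boxv k r w"

datatype pattern = Q1 | Q2 | Q3

text \<open>Grid neighbours of v attached to the first vertex p of the path P_v.\<close>
fun pside :: "pattern \<Rightarrow> gvert \<Rightarrow> gvert set" where
  "pside Q1 (i,j) = {(i-1,j), (i,j-1)}"
| "pside Q2 (i,j) = {(i,j+1), (i-1,j)}"
| "pside Q3 (i,j) = {(i-1,j), (i+1,j)}"

text \<open>The endpoint of P_v that is attached towards the grid neighbour w.\<close>
definition att :: "(gobj \<Rightarrow> nat list) \<Rightarrow> (gvert \<Rightarrow> pattern) \<Rightarrow> gvert \<Rightarrow> gvert \<Rightarrow> nat" where
  "att P pat v w = (if w \<in> pside (pat v) v then hd (P (GVert v)) else last (P (GVert v)))"

text \<open>The path of G playing the role of a grid object: P_v for vertices,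
  the full path (overline P_vw) for edges.\<close>
fun fullpath :: "(gobj \<Rightarrow> nat list) \<Rightarrow> (gvert \<Rightarrow> pattern) \<Rightarrow> gobj \<Rightarrow> nat list" where
  "fullpath P pat (GVert v) = P (GVert v)"
| "fullpath P pat (GEdge v w) = att P pat v w # P (GEdge v w) @ [att P pat w v]"

definition pathedges :: "nat list \<Rightarrow> nat set set" where
  "pathedges xs = {{xs ! i, xs ! (i+1)} | i. i + 1 < length xs}"

text \<open>(V,E) is a k x k pseudogrid with grid-partition given by the paths P mu
  (P (GEdge v w) is the internal path P_vw listed from v towards w) and
  attachment patterns pat.\<close>
definition pseudogrid ::
  "nat \<Rightarrow> nat set \<Rightarrow> nat set set \<Rightarrow> (gobj \<Rightarrow> nat list) \<Rightarrow> (gvert \<Rightarrow> pattern) \<Rightarrow> bool" where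
  "pseudogrid k V E P pat \<longleftrightarrow>
     (\<forall>\<mu>\<in>VE k. distinct (P \<mu>)) \<and>
     (\<forall>v\<in>grid k. P (GVert v) \<noteq> []) \<and>
     (\<forall>v\<in>grid k. gdeg k v < 4 \<longrightarrow> length (P (GVert v)) = 1) \<and>
     (\<forall>\<mu>\<in>VE k. \<forall>\<nu>\<in>VE k. \<mu> \<noteq> \<nu> \<longrightarrow> set (P \<mu>) \<inter> set (P \<nu>) = {}) \<and>
     V = (\<Union>\<mu>\<in>VE k. set (P \<mu>)) \<and>
     E = (\<Union>\<mu>\<in>VE k. pathedges (fullpath P pat \<mu>))"

definition intG :: "nat \<Rightarrow> nat \<Rightarrow> (gobj \<Rightarrow> nat list) \<Rightarrow> nat set" where
  "intG k r P = (\<Union>\<mu>\<in>VEsub (intbox k r). set (P \<mu>))"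

definition tboxo :: "nat \<Rightarrow> nat \<Rightarrow> (gobj \<Rightarrow> nat list) \<Rightarrow> gobj \<Rightarrow> nat set" where
  "tboxo k r P \<mu> = (\<Union>\<nu>\<in>VEsub (box k r \<mu>). set (P \<nu>))"

definition tbox :: "nat \<Rightarrow> nat \<Rightarrow> (gobj \<Rightarrow> nat list) \<Rightarrow> nat \<Rightarrow> nat set" where
  "tbox k r P x = tboxo k r P (THE \<mu>. \<mu> \<in> VE k \<and> x \<in> set (P \<mu>))"

definition colpre :: "nat \<Rightarrow> (gobj \<Rightarrow> nat list) \<Rightarrow> (nat \<Rightarrow> 'c) \<Rightarrow> 'c set \<Rightarrow> gobj set" where
  "colpre k P \<phi> A = {\<mu> \<in> VE k. A \<inter> \<phi> ` set (P \<mu>) \<noteq> {}}"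

end

theory Submission
  imports Defs "HOL-Library.FuncSet"
begin

lemma hall:
  fixes S :: "'i \<Rightarrow> 'o set"
  assumes "finite I" "\<forall>i\<in>I. finite (S i)"
    "\<forall>J\<subseteq>I. card J \<le> card (\<Union>(S ` J))"
  shows "\<exists>g. inj_on g I \<and> (\<forall>i\<in>I. g i \<in> S i)"
  using assms
proof (induction "card I" arbitrary: I S rule: less_induct)
  case less
  show ?case
  proof (cases "I = {}")
    case True then show ?thesis by auto
  next
    case ne: False
    show ?thesis
    proof (cases "\<exists>J. J \<subseteq> I \<and> J \<noteq> {} \<and> J \<noteq> I \<and> card (\<Union>(S ` J)) \<le> card J")
      case False
      from ne obtain i0 where i0: "i0 \<in> I" by auto
      have "card {i0} \<le> card (\<Union>(S ` {i0}))" using less.prems(3) i0 by (meson empty_subsetI insert_subset)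
      then have "S i0 \<noteq> {}" by auto
      then obtain x where x: "x \<in> S i0" by auto
      define I' where "I' = I - {i0}"
      define S' where "S' = (\<lambda>i. S i - {x})"
      have cI: "card I' < card I" unfolding I'_def using i0 less.prems(1) by (metis card_Diff1_less)
      have fin': "\<forall>i\<in>I'. finite (S' i)" using less.prems(2) unfolding S'_def I'_def by auto
      have hall': "\<forall>J\<subseteq>I'. card J \<le> card (\<Union>(S' ` J))"
      proof (intro allI impI)
        fix J assume J: "J \<subseteq> I'"
        show "card J \<le> card (\<Union>(S' ` J))"
        proof (cases "J = {}")
          case True then show ?thesis by simp
        next
          case Jne: False
          have "J \<noteq> I" using J i0 unfolding I'_def by auto
          moreover have "J \<subseteq> I" using J unfolding I'_def by auto
          ultimately have "\<not> card (\<Union>(S ` J)) \<le> card J" using False Jne by blast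
          then have lt: "card J < card (\<Union>(S ` J))" by simp
          have eq: "\<Union>(S' ` J) = \<Union>(S ` J) - {x}" unfolding S'_def by auto
          have fin: "finite (\<Union>(S ` J))" using \<open>J \<subseteq> I\<close> less.prems(1,2) by (meson UN_iff finite_UN_I finite_subset subsetD)
          have "card (\<Union>(S ` J)) \<le> card (\<Union>(S ` J) - {x}) + 1"
          proof (cases "x \<in> \<Union>(S ` J)")
            case True
            then show ?thesis using card_Suc_Diff1[OF fin True] by linarith
          next
            case False then show ?thesis by simp
          qed
          then have "card (\<Union>(S ` J)) \<le> card (\<Union>(S' ` J)) + 1" using eq by simp
          then show ?thesis using lt by linarith
        qed
      qed
      have "finite I'" using less.prems(1) unfolding I'_def by auto
      from less.hyps[OF cI this fin' hall'] obtain g' where g': "inj_on g' I'" "\<forall>i\<in>I'. g' i \<in> S' i" by blast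
      define g where "g = g'(i0 := x)"
      have "inj_on g I"
        unfolding inj_on_def g_def
      proof (intro ballI impI)
        fix a b assume a: "a \<in> I" and b: "b \<in> I" and eq: "(g'(i0 := x)) a = (g'(i0 := x)) b"
        show "a = b"
        proof (cases "a = i0"; cases "b = i0")
          assume "a = i0" "b \<noteq> i0"
          then have "g' b = x" using eq by simp
          moreover have "g' b \<in> S' b" using g'(2) b \<open>b \<noteq> i0\<close> unfolding I'_def by auto
          ultimately show ?thesis unfolding S'_def by auto
        next
          assume "a \<noteq> i0" "b = i0"
          then have "g' a = x" using eq by simp
          moreover have "g' a \<in> S' a" using g'(2) a \<open>a \<noteq> i0\<close> unfolding I'_def by auto
          ultimately show ?thesis unfolding S'_def by auto
        next
          assume "a \<noteq> i0" "b \<noteq> i0"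
          then show ?thesis using eq g'(1) a b unfolding inj_on_def I'_def by auto
        qed simp
      qed
      moreover have "\<forall>i\<in>I. g i \<in> S i" using g'(2) x unfolding g_def S'_def I'_def by auto
      ultimately show ?thesis by blast
    next
      case True
      then obtain J where J: "J \<subseteq> I" "J \<noteq> {}" "J \<noteq> I" "card (\<Union>(S ` J)) \<le> card J" by blast
      have finJ: "finite J" using J(1) less.prems(1) finite_subset by blast
      have cJ: "card J < card I" using J less.prems(1) by (simp add: psubset_card_mono psubsetI)
      have "\<forall>i\<in>J. finite (S i)" using J(1) less.prems(2) by auto
      moreover have "\<forall>L\<subseteq>J. card L \<le> card (\<Union>(S ` L))" using J(1) less.prems(3) by (meson order_trans)
      ultimately obtain g1 where g1: "inj_on g1 J" "\<forall>i\<in>J. g1 i \<in> S i"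
        using less.hyps[OF cJ finJ] by blast
      define X where "X = \<Union>(S ` J)"
      define S'' where "S'' = (\<lambda>i. S i - X)"
      have cIJ: "card (I - J) < card I"
      proof -
        have "card (I - J) = card I - card J" using J(1) finJ by (simp add: card_Diff_subset)
        moreover have "card J > 0" using finJ J(2) by (simp add: card_gt_0_iff)
        moreover have "card J \<le> card I" using cJ by simp
        ultimately show ?thesis by linarith
      qed
      have finX: "finite X" unfolding X_def using finJ J(1) less.prems(2) by auto
      have fin'': "\<forall>i\<in>I - J. finite (S'' i)" using less.prems(2) unfolding S''_def by auto
      have hall'': "\<forall>L\<subseteq>I - J. card L \<le> card (\<Union>(S'' ` L))"
      proof (intro allI impI)
        fix L assume L: "L \<subseteq> I - J"
        have finL: "finite L" using L less.prems(1) finite_subset by blast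
        have "card (L \<union> J) \<le> card (\<Union>(S ` (L \<union> J)))" using L J(1) less.prems(3) by (meson Diff_subset Un_least order_trans)
        moreover have "card (L \<union> J) = card L + card J" using L finL finJ by (subst card_Un_disjoint) auto
        moreover have "\<Union>(S ` (L \<union> J)) \<subseteq> \<Union>(S'' ` L) \<union> X" unfolding S''_def X_def by auto
        moreover have "finite (\<Union>(S'' ` L))" using fin'' L finL by auto
        ultimately have "card L + card J \<le> card (\<Union>(S'' ` L)) + card X"
          using card_mono[of "\<Union>(S'' ` L) \<union> X" "\<Union>(S ` (L \<union> J))"] card_Un_le[of "\<Union>(S'' ` L)" X] finX
          by simp
        then show "card L \<le> card (\<Union>(S'' ` L))" using J(4) unfolding X_def by linarith
      qed
      have "finite (I - J)" using less.prems(1) by auto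
      from less.hyps[OF cIJ this fin'' hall''] obtain g2 where g2: "inj_on g2 (I - J)" "\<forall>i\<in>I - J. g2 i \<in> S'' i" by blast
      define g where "g = (\<lambda>i. if i \<in> J then g1 i else g2 i)"
      have "inj_on g I"
        unfolding inj_on_def g_def
      proof (intro ballI impI)
        fix a b assume a: "a \<in> I" and b: "b \<in> I" and eq: "(if a \<in> J then g1 a else g2 a) = (if b \<in> J then g1 b else g2 b)"
        have X1: "\<And>i. i \<in> J \<Longrightarrow> g1 i \<in> X" using g1(2) unfolding X_def by auto
        have X2: "\<And>i. i \<in> I - J \<Longrightarrow> g2 i \<notin> X" using g2(2) unfolding S''_def by auto
        show "a = b"
        proof (cases "a \<in> J"; cases "b \<in> J")
          assume "a \<in> J" "b \<in> J" then show ?thesis using eq g1(1) unfolding inj_on_def by auto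
        next
          assume "a \<notin> J" "b \<notin> J" then show ?thesis using eq g2(1) a b unfolding inj_on_def by auto
        next
          assume "a \<in> J" "b \<notin> J" then show ?thesis using eq X1[of a] X2[of b] b by auto
        next
          assume "a \<notin> J" "b \<in> J" then show ?thesis using eq X1[of b] X2[of a] a by auto
        qed
      qed
      moreover have "\<forall>i\<in>I. g i \<in> S i" using g1(2) g2(2) unfolding g_def S''_def by auto
      ultimately show ?thesis by blast
    qed
  qed
qed

lemma lll:
  fixes cls :: "'o \<Rightarrow> 'i" and conf :: "'o \<Rightarrow> 'o \<Rightarrow> bool"
  assumes finI: "finite I" and finU: "finite U" and clsU: "cls ` U \<subseteq> I"
    and cardV: "\<forall>c\<in>I. card {x\<in>U. cls x = c} = h"
    and hpos: "h \<ge> 1"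
    and sym: "\<forall>a b. conf a b \<longrightarrow> conf b a"
    and deg: "\<forall>a\<in>U. card {b\<in>U. conf a b} \<le> M"
    and hM: "16 * M \<le> h"
  shows "\<exists>f. (\<forall>c\<in>I. f c \<in> U \<and> cls (f c) = c) \<and> (\<forall>c\<in>I. \<forall>c'\<in>I. c \<noteq> c' \<longrightarrow> \<not> conf (f c) (f c'))"
proof -
  define Vc where "Vc c = {x\<in>U. cls x = c}" for c
  define \<Omega> where "\<Omega> = PiE I Vc"
  define Ev where "Ev = {(a,b). a\<in>U \<and> b\<in>U \<and> conf a b \<and> cls a \<noteq> cls b}"
  define vars where "vars e = {cls (fst e), cls (snd e)}" for e :: "'o \<times> 'o"
  define Bad where "Bad e f \<longleftrightarrow> f (cls (fst e)) = fst e \<and> f (cls (snd e)) = snd e" for e :: "'o \<times> 'o" and f :: "'i \<Rightarrow> 'o"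
  define N where "N S = {f\<in>\<Omega>. \<forall>e\<in>S. \<not> Bad e f}" for S
  define B where "B e X = {f\<in>X. Bad e f}" for e X
  have finV: "finite (Vc c)" for c unfolding Vc_def using finU by auto
  have fin\<Omega>: "finite \<Omega>" unfolding \<Omega>_def using finI finV by (simp add: finite_PiE)
  have finEv: "finite Ev" unfolding Ev_def
    by (rule finite_subset[of _ "U \<times> U"]) (use finU in auto)
  have finN: "finite (N S)" for S unfolding N_def using fin\<Omega> by auto
  have finB: "finite (B e (N S))" for e S unfolding B_def using finN by auto
  have card\<Omega>: "card \<Omega> > 0"
  proof -
    have "card \<Omega> = (\<Prod>c\<in>I. card (Vc c))" unfolding \<Omega>_def by (simp add: card_PiE finI)
    also have "\<dots> = h ^ card I" using cardV unfolding Vc_def by simp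
    finally show ?thesis using hpos by simp
  qed
  have indep: "h * h * card (B e (N S)) = card (N S)"
    if e: "e \<in> Ev" and S: "\<forall>e'\<in>S. vars e' \<inter> vars e = {}" for e S
  proof -
    obtain a b where ab: "e = (a,b)" by (cases e)
    define c1 where "c1 = cls a"
    define c2 where "c2 = cls b"
    have aU: "a \<in> U" and bU: "b \<in> U" and c12: "c1 \<noteq> c2" using e unfolding ab Ev_def c1_def c2_def by auto
    have c1I: "c1 \<in> I" and c2I: "c2 \<in> I" using aU bU clsU unfolding c1_def c2_def by auto
    have aV: "a \<in> Vc c1" and bV: "b \<in> Vc c2" using aU bU unfolding Vc_def c1_def c2_def by auto
    have upd\<Omega>: "f(c1 := x, c2 := y) \<in> \<Omega>" if "f \<in> \<Omega>" "x \<in> Vc c1" "y \<in> Vc c2" for f x y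
      using that c1I c2I unfolding \<Omega>_def PiE_def Pi_def extensional_def by auto
    have updBad: "Bad e' (f(c1 := x, c2 := y)) = Bad e' f" if "e' \<in> S" for e' f x y
    proof -
      have "cls (fst e') \<noteq> c1" "cls (fst e') \<noteq> c2" "cls (snd e') \<noteq> c1" "cls (snd e') \<noteq> c2"
        using S that unfolding vars_def ab c1_def c2_def by auto
      then show ?thesis unfolding Bad_def by simp
    qed
    have updN: "f(c1 := x, c2 := y) \<in> N S" if "f \<in> N S" "x \<in> Vc c1" "y \<in> Vc c2" for f x y
      using that upd\<Omega> updBad unfolding N_def by auto
    have Bade: "Bad e f \<longleftrightarrow> f c1 = a \<and> f c2 = b" for f unfolding Bad_def ab c1_def c2_def by simp
    define F where "F f = (f c1, f c2, f(c1 := a, c2 := b))" for f :: "'i \<Rightarrow> 'o"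
    define G where "G p = (snd (snd p))(c1 := fst p, c2 := fst (snd p))" for p :: "'o \<times> 'o \<times> ('i \<Rightarrow> 'o)"
    have "bij_betw F (N S) (Vc c1 \<times> Vc c2 \<times> B e (N S))"
    proof (rule bij_betw_byWitness[where f' = G])
      show "\<forall>f\<in>N S. G (F f) = f" unfolding F_def G_def using c12 by (auto intro!: ext)
      show "\<forall>p\<in>Vc c1 \<times> Vc c2 \<times> B e (N S). F (G p) = p"
        unfolding F_def G_def B_def Bade using c12 by (auto intro!: ext)
      show "F ` N S \<subseteq> Vc c1 \<times> Vc c2 \<times> B e (N S)"
      proof
        fix p assume "p \<in> F ` N S"
        then obtain f where f: "f \<in> N S" "p = F f" by auto
        have "f \<in> \<Omega>" using f unfolding N_def by auto
        then have "f c1 \<in> Vc c1" "f c2 \<in> Vc c2" using c1I c2I unfolding \<Omega>_def by auto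
        moreover have "f(c1 := a, c2 := b) \<in> N S" using updN f aV bV by auto
        ultimately show "p \<in> Vc c1 \<times> Vc c2 \<times> B e (N S)" using f c12 unfolding F_def B_def Bade by auto
      qed
      show "G ` (Vc c1 \<times> Vc c2 \<times> B e (N S)) \<subseteq> N S"
        using updN unfolding G_def B_def by auto
    qed
    then have "card (N S) = card (Vc c1 \<times> Vc c2 \<times> B e (N S))" by (rule bij_betw_same_card)
    also have "\<dots> = card (Vc c1) * card (Vc c2) * card (B e (N S))" by (simp add: card_cartesian_product)
    also have "\<dots> = h * h * card (B e (N S))" using cardV c1I c2I unfolding Vc_def by simp
    finally show ?thesis by simp
  qed
  have Dbound: "card {e'\<in>Ev. vars e' \<inter> vars e \<noteq> {}} \<le> 4 * h * M" if e: "e \<in> Ev" for e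
  proof -
    have one: "card {e'\<in>Ev. cls (fst e') = c} \<le> h * M" and two: "card {e'\<in>Ev. cls (snd e') = c} \<le> h * M"
      if c: "c \<in> I" for c
    proof -
      have sub1: "{e'\<in>Ev. cls (fst e') = c} \<subseteq> Sigma (Vc c) (\<lambda>a. {b\<in>U. conf a b})"
        unfolding Ev_def Vc_def by auto
      have "card (Sigma (Vc c) (\<lambda>a. {b\<in>U. conf a b})) = (\<Sum>a\<in>Vc c. card {b\<in>U. conf a b})"
        using finV finU by (simp add: card_SigmaI)
      also have "\<dots> \<le> (\<Sum>a\<in>Vc c. M)" using deg unfolding Vc_def by (intro sum_mono) auto
      also have "\<dots> = h * M" using cardV c unfolding Vc_def by simp
      finally have sig: "card (Sigma (Vc c) (\<lambda>a. {b\<in>U. conf a b})) \<le> h * M" .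
      have finSig: "finite (Sigma (Vc c) (\<lambda>a. {b\<in>U. conf a b}))" using finV finU by auto
      show "card {e'\<in>Ev. cls (fst e') = c} \<le> h * M"
        using card_mono[OF finSig sub1] sig by linarith
      have sub2: "{e'\<in>Ev. cls (snd e') = c} \<subseteq> prod.swap ` Sigma (Vc c) (\<lambda>a. {b\<in>U. conf a b})"
      proof
        fix e' assume "e' \<in> {e'\<in>Ev. cls (snd e') = c}"
        then show "e' \<in> prod.swap ` Sigma (Vc c) (\<lambda>a. {b\<in>U. conf a b})"
          unfolding Ev_def Vc_def using sym by (cases e') (auto intro!: image_eqI[where x = "prod.swap e'"])
      qed
      have "card (prod.swap ` Sigma (Vc c) (\<lambda>a. {b\<in>U. conf a b})) \<le> h * M"
        using card_image_le[OF finSig, of prod.swap] sig by linarith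
      then show "card {e'\<in>Ev. cls (snd e') = c} \<le> h * M"
        using card_mono[OF _ sub2] finSig by (meson finite_imageI le_trans)
    qed
    have varsI: "vars e \<subseteq> I" using e clsU unfolding Ev_def vars_def by auto
    have sub: "{e'\<in>Ev. vars e' \<inter> vars e \<noteq> {}} \<subseteq> (\<Union>c\<in>vars e. {e'\<in>Ev. cls (fst e') = c} \<union> {e'\<in>Ev. cls (snd e') = c})"
      unfolding vars_def by auto
    have "card (\<Union>c\<in>vars e. {e'\<in>Ev. cls (fst e') = c} \<union> {e'\<in>Ev. cls (snd e') = c})
        \<le> (\<Sum>c\<in>vars e. card ({e'\<in>Ev. cls (fst e') = c} \<union> {e'\<in>Ev. cls (snd e') = c}))"
      by (rule card_UN_le) (simp add: vars_def)
    also have "\<dots> \<le> (\<Sum>c\<in>vars e. 2 * h * M)"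
    proof (rule sum_mono)
      fix c assume "c \<in> vars e"
      then have "c \<in> I" using varsI by auto
      then show "card ({e'\<in>Ev. cls (fst e') = c} \<union> {e'\<in>Ev. cls (snd e') = c}) \<le> 2 * h * M"
        using one two card_Un_le[of "{e'\<in>Ev. cls (fst e') = c}" "{e'\<in>Ev. cls (snd e') = c}"] by fastforce
    qed
    also have "\<dots> = card (vars e) * (2 * h * M)" by simp
    also have "\<dots> \<le> 2 * (2 * h * M)"
    proof -
      have "card (vars e) \<le> 2" unfolding vars_def by (simp add: card_insert_le_m1)
      then show ?thesis by (rule mult_le_mono1)
    qed
    finally have "card (\<Union>c\<in>vars e. {e'\<in>Ev. cls (fst e') = c} \<union> {e'\<in>Ev. cls (snd e') = c}) \<le> 4 * h * M" by simp
    moreover have "finite (\<Union>c\<in>vars e. {e'\<in>Ev. cls (fst e') = c} \<union> {e'\<in>Ev. cls (snd e') = c})"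
      using finEv by (simp add: vars_def)
    ultimately show ?thesis using card_mono[OF _ sub] by (meson le_trans)
  qed
  have mainb: "\<forall>S. S \<subseteq> Ev \<longrightarrow> card S = n \<longrightarrow> (\<forall>e\<in>Ev - S. h * h * card (B e (N S)) \<le> 2 * card (N S))" for n
  proof (induction n rule: less_induct)
    case (less n)
    show ?case
    proof (intro allI impI ballI)
      fix S e assume S: "S \<subseteq> Ev" and cS: "card S = n" and e: "e \<in> Ev - S"
      define S1 where "S1 = {e'\<in>S. vars e' \<inter> vars e \<noteq> {}}"
      define S2 where "S2 = S - S1"
      have finS: "finite S" using S finEv finite_subset by blast
      have ind2: "h * h * card (B e (N S2)) = card (N S2)"
        using indep[of e S2] e unfolding S2_def S1_def by auto
      have BS: "B e (N S) \<subseteq> B e (N S2)" unfolding B_def N_def S2_def by auto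
      have cBS: "card (B e (N S)) \<le> card (B e (N S2))" using card_mono[OF finB BS] .
      show "h * h * card (B e (N S)) \<le> 2 * card (N S)"
      proof (cases "S1 = {}")
        case True
        then have "S2 = S" unfolding S2_def by simp
        then show ?thesis using ind2 by simp
      next
        case False
        have lt: "card S2 < n"
        proof -
          have "S2 \<subset> S" using False unfolding S2_def S1_def by auto
          then have "card S2 < card S" by (rule psubset_card_mono[OF finS])
          then show ?thesis using cS by simp
        qed
        have IH: "\<forall>e'\<in>Ev - S2. h * h * card (B e' (N S2)) \<le> 2 * card (N S2)"
        proof -
          have "S2 \<subseteq> Ev" using S unfolding S2_def by auto
          then show ?thesis using less.IH[OF lt] by blast
        qed
        have S1sub: "S1 \<subseteq> Ev - S2" using S unfolding S1_def S2_def by auto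
        have cover: "N S2 \<subseteq> N S \<union> (\<Union>e'\<in>S1. B e' (N S2))"
          unfolding N_def B_def S2_def by auto
        have "card (N S2) \<le> card (N S \<union> (\<Union>e'\<in>S1. B e' (N S2)))"
          using card_mono[OF _ cover] finN finB finS unfolding S1_def by auto
        also have "\<dots> \<le> card (N S) + card (\<Union>e'\<in>S1. B e' (N S2))" by (rule card_Un_le)
        also have "card (\<Union>e'\<in>S1. B e' (N S2)) \<le> (\<Sum>e'\<in>S1. card (B e' (N S2)))"
          by (rule card_UN_le) (use finS in \<open>simp add: S1_def\<close>)
        finally have c1: "card (N S2) \<le> card (N S) + (\<Sum>e'\<in>S1. card (B e' (N S2)))" by simp
        have "h * h * (\<Sum>e'\<in>S1. card (B e' (N S2))) = (\<Sum>e'\<in>S1. h * h * card (B e' (N S2)))"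
          by (simp add: sum_distrib_left)
        also have "\<dots> \<le> (\<Sum>e'\<in>S1. 2 * card (N S2))" using IH S1sub by (intro sum_mono) auto
        also have "\<dots> = card S1 * (2 * card (N S2))" by simp
        also have "\<dots> \<le> (4 * h * M) * (2 * card (N S2))"
        proof (rule mult_le_mono1)
          have "S1 \<subseteq> {e'\<in>Ev. vars e' \<inter> vars e \<noteq> {}}" using S unfolding S1_def by auto
          then have "card S1 \<le> card {e'\<in>Ev. vars e' \<inter> vars e \<noteq> {}}" using finEv by (intro card_mono) auto
          then show "card S1 \<le> 4 * h * M" using Dbound[of e] e by simp
        qed
        finally have c2: "h * h * (\<Sum>e'\<in>S1. card (B e' (N S2))) \<le> 8 * (h * M) * card (N S2)" by simp
        have c3: "16 * (h * M) * card (N S2) \<le> h * h * card (N S2)"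
          using hM by (simp add: mult_le_mono1 mult.assoc mult.left_commute)
        define H where "H = h * h"
        define X where "X = card (N S2)"
        define Y where "Y = card (N S)"
        define Z where "Z = (\<Sum>e'\<in>S1. card (B e' (N S2)))"
        define W where "W = h * M * card (N S2)"
        have d1: "H * X \<le> H * Y + H * Z" using c1 unfolding H_def X_def Y_def Z_def
          by (metis add_mult_distrib2 mult_le_mono2)
        have d2: "H * Z \<le> 8 * W" using c2 unfolding H_def Z_def W_def by (simp add: mult.assoc)
        have d3: "16 * W \<le> H * X" using c3 unfolding H_def X_def W_def by (simp add: mult.assoc)
        have "H * X \<le> H * (2 * Y)" using d1 d2 d3 by linarith
        then have "X \<le> 2 * Y" unfolding H_def using hpos by simp
        moreover have "h * h * card (B e (N S)) \<le> X" using ind2 cBS unfolding X_def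
          by (metis mult_le_mono2)
        ultimately show ?thesis unfolding Y_def by linarith
      qed
    qed
  qed
  have posN: "S \<subseteq> Ev \<Longrightarrow> card (N S) > 0" for S
  proof -
    assume "S \<subseteq> Ev"
    then have "finite S" using finEv finite_subset by blast
    then show ?thesis using \<open>S \<subseteq> Ev\<close>
    proof (induction S rule: finite_induct)
      case empty
      have "N {} = \<Omega>" unfolding N_def by simp
      then show ?case using card\<Omega> by simp
    next
      case (insert e S)
      have eEv: "e \<in> Ev" using insert by auto
      have pos: "card (N S) > 0" using insert by auto
      have b: "h * h * card (B e (N S)) \<le> 2 * card (N S)" using mainb[of "card S"] insert by auto
      obtain a b where ab: "e = (a, b)" by (cases e)
      have "conf a b" "a \<in> U" "b \<in> U" using eEv unfolding ab Ev_def by auto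
      then have "card {b\<in>U. conf a b} \<ge> 1" 
      proof -
        have "b \<in> {b\<in>U. conf a b}" using \<open>conf a b\<close> \<open>b \<in> U\<close> by simp
        moreover have "finite {b\<in>U. conf a b}" using finU by simp
        ultimately show ?thesis by (metis One_nat_def Suc_leI card_gt_0_iff empty_iff)
      qed
      then have "M \<ge> 1" using deg \<open>a \<in> U\<close> by (meson le_trans)
      then have "h \<ge> 16" using hM by linarith
      then have "4 \<le> h * h" using mult_le_mono[of 2 h 2 h] by simp
      then have "4 * card (B e (N S)) \<le> 2 * card (N S)" using b by (meson le_trans mult_le_mono1)
      then have lt: "card (B e (N S)) < card (N S)" using pos by linarith
      have "N (insert e S) = N S - B e (N S)" unfolding N_def B_def by auto
      moreover have "B e (N S) \<subseteq> N S" unfolding B_def by auto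
      ultimately have "card (N (insert e S)) = card (N S) - card (B e (N S))"
        using finB by (simp add: card_Diff_subset)
      then show ?case using lt by simp
    qed
  qed
  have "card (N Ev) > 0" using posN by simp
  then obtain f where f: "f \<in> N Ev" by (metis card_gt_0_iff ex_in_conv)
  then have f\<Omega>: "f \<in> \<Omega>" and fgood: "\<forall>e\<in>Ev. \<not> Bad e f" unfolding N_def by auto
  have fV: "\<forall>c\<in>I. f c \<in> U \<and> cls (f c) = c" using f\<Omega> unfolding \<Omega>_def Vc_def by auto
  moreover have "\<forall>c\<in>I. \<forall>c'\<in>I. c \<noteq> c' \<longrightarrow> \<not> conf (f c) (f c')"
  proof (intro ballI impI notI)
    fix c c' assume c: "c \<in> I" "c' \<in> I" "c \<noteq> c'" "conf (f c) (f c')"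
    then have "(f c, f c') \<in> Ev" using fV unfolding Ev_def by auto
    moreover have "Bad (f c, f c') f" using fV c unfolding Bad_def by auto
    ultimately show False using fgood by auto
  qed
  ultimately show ?thesis by blast
qed

fun pos :: "gobj \<Rightarrow> gvert" where
  "pos (GVert v) = v" | "pos (GEdge v w) = v"

definition Obj3 :: "gvert set \<Rightarrow> gobj set" where
  "Obj3 X = GVert ` X \<union> (\<lambda>q. GEdge q (fst q + 1, snd q)) ` X \<union> (\<lambda>q. GEdge q (fst q, snd q + 1)) ` X"

definition Sq :: "gvert \<Rightarrow> nat \<Rightarrow> gvert set" where
  "Sq p R = {fst p - R .. fst p + R} \<times> {snd p - R .. snd p + R}"

definition conf :: "nat \<Rightarrow> nat \<Rightarrow> gobj \<Rightarrow> gobj \<Rightarrow> bool" where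
  "conf k r \<mu> \<nu> \<longleftrightarrow> \<nu> \<in> VEsub (box k r \<mu>) \<or> \<mu> \<in> VEsub (box k r \<nu>)"

lemma VEsub_Obj3: "\<nu> \<in> VEsub X \<Longrightarrow> \<nu> \<in> Obj3 {pos \<nu>} \<and> pos \<nu> \<in> X"
  unfolding VEsub_def Obj3_def fwd_def by auto

lemma VEsub_mono: "X \<subseteq> Y \<Longrightarrow> VEsub X \<subseteq> VEsub Y"
  unfolding VEsub_def by blast

lemma Obj3_mono: "X \<subseteq> Y \<Longrightarrow> Obj3 X \<subseteq> Obj3 Y"
  unfolding Obj3_def by blast

lemma finite_Obj3: "finite X \<Longrightarrow> finite (Obj3 X)"
  unfolding Obj3_def by auto

lemma card_Obj3: "finite X \<Longrightarrow> card (Obj3 X) \<le> 3 * card X"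
proof -
  assume X: "finite X"
  have "card (Obj3 X) \<le> card (GVert ` X \<union> (\<lambda>q. GEdge q (fst q + 1, snd q)) ` X) + card ((\<lambda>q. GEdge q (fst q, snd q + 1)) ` X)"
    unfolding Obj3_def by (rule card_Un_le)
  also have "\<dots> \<le> card (GVert ` X) + card ((\<lambda>q. GEdge q (fst q + 1, snd q)) ` X) + card ((\<lambda>q. GEdge q (fst q, snd q + 1)) ` X)"
    using card_Un_le by simp
  also have "\<dots> \<le> card X + card X + card X"
    using card_image_le[OF X] by (meson add_le_mono)
  finally show ?thesis by simp
qed

lemma finite_VEsub: "finite X \<Longrightarrow> finite (VEsub X)"
proof -
  assume X: "finite X"
  have "VEsub X \<subseteq> Obj3 X" using VEsub_Obj3 Obj3_mono by blast
  then show ?thesis using finite_Obj3[OF X] finite_subset by blast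
qed

lemma finite_grid: "finite (grid k)" unfolding grid_def by simp

lemma finite_VE: "finite (VE k)" unfolding VE_def by (simp add: finite_VEsub finite_grid)

lemma box_grid: "box k r \<mu> \<subseteq> grid k"
  by (cases \<mu>) (auto simp: boxv_def)

lemma VEsub_box_VE: "VEsub (box k r \<mu>) \<subseteq> VE k"
  unfolding VE_def by (rule VEsub_mono[OF box_grid])

lemma intbox_grid: "intbox k r \<subseteq> grid k"
  unfolding intbox_def grid_def by auto

lemma box_near:
  assumes "\<mu> \<in> VE k" "x \<in> box k r \<mu>"
  shows "fst (pos \<mu>) \<le> fst x + r \<and> fst x \<le> fst (pos \<mu>) + r + 1 \<and>
         snd (pos \<mu>) \<le> snd x + r \<and> snd x \<le> snd (pos \<mu>) + r + 1"
proof (cases \<mu>)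
  case (GVert v)
  then show ?thesis using assms by (auto simp: boxv_def)
next
  case (GEdge v w)
  then have "fwd v w" using assms(1) unfolding VE_def VEsub_def by auto
  then show ?thesis using assms GEdge by (auto simp: boxv_def fwd_def)
qed

lemma card_Sq: "card (Sq p R) \<le> (2 * R + 1)^2"
proof -
  have a: "card {fst p - R .. fst p + R} \<le> 2 * R + 1" by simp
  have b: "card {snd p - R .. snd p + R} \<le> 2 * R + 1" by simp
  have "card (Sq p R) = card {fst p - R .. fst p + R} * card {snd p - R .. snd p + R}"
    unfolding Sq_def by (simp add: card_cartesian_product)
  also have "\<dots> \<le> (2 * R + 1) * (2 * R + 1)" using a b by (rule mult_le_mono)
  finally show ?thesis by (simp add: power2_eq_square)
qed

lemma conf_near:
  assumes "\<mu> \<in> VE k" "\<nu> \<in> VE k" "conf k r \<mu> \<nu>"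
  shows "pos \<nu> \<in> Sq (pos \<mu>) (r + 1)"
  using assms(3) unfolding conf_def
proof
  assume "\<nu> \<in> VEsub (box k r \<mu>)"
  then have "pos \<nu> \<in> box k r \<mu>" using VEsub_Obj3 by blast
  from box_near[OF assms(1) this] show ?thesis unfolding Sq_def by (cases "pos \<nu>") auto
next
  assume "\<mu> \<in> VEsub (box k r \<nu>)"
  then have "pos \<mu> \<in> box k r \<nu>" using VEsub_Obj3 by blast
  from box_near[OF assms(2) this] show ?thesis unfolding Sq_def by (cases "pos \<nu>") auto
qed

lemma conf_deg:
  assumes "\<mu> \<in> VE k"
  shows "card {\<nu>\<in>VE k. conf k r \<mu> \<nu>} \<le> 3 * (2 * r + 3)^2"
proof -
  have sub: "{\<nu>\<in>VE k. conf k r \<mu> \<nu>} \<subseteq> Obj3 (Sq (pos \<mu>) (r + 1))"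
  proof
    fix \<nu> assume "\<nu> \<in> {\<nu>\<in>VE k. conf k r \<mu> \<nu>}"
    then have n: "\<nu> \<in> VE k" "conf k r \<mu> \<nu>" by auto
    have "pos \<nu> \<in> Sq (pos \<mu>) (r + 1)" using conf_near[OF assms n] .
    moreover have "\<nu> \<in> Obj3 {pos \<nu>}" using n(1) VEsub_Obj3 unfolding VE_def by blast
    ultimately show "\<nu> \<in> Obj3 (Sq (pos \<mu>) (r + 1))" using Obj3_mono[of "{pos \<nu>}"] by blast
  qed
  have finSq: "finite (Sq (pos \<mu>) (r + 1))" unfolding Sq_def by simp
  have "card {\<nu>\<in>VE k. conf k r \<mu> \<nu>} \<le> card (Obj3 (Sq (pos \<mu>) (r + 1)))"
    using card_mono[OF finite_Obj3[OF finSq] sub] .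
  also have "\<dots> \<le> 3 * card (Sq (pos \<mu>) (r + 1))" using card_Obj3[OF finSq] .
  also have "\<dots> \<le> 3 * (2 * (r + 1) + 1)^2" by (intro mult_le_mono2 card_Sq)
  also have "(2 * (r + 1) + 1) = 2 * r + 3" by simp
  finally show ?thesis by simp
qed

lemma bound_d:
  assumes r: "r \<ge> (10::nat)"
  shows "real (2 * (16 * (3 * (2 * r + 3)^2))) \<le> 864 * real r ^ 4 * ln (real r)"
proof -
  have "2 * r + 3 \<le> 3 * r" using r by simp
  then have "(2 * r + 3)^2 \<le> (3 * r)^2" by (rule power_mono) simp
  then have a: "2 * (16 * (3 * (2 * r + 3)^2)) \<le> 864 * r^2" by (simp add: power_mult_distrib)
  have ln1: "1 \<le> ln (real r)"
  proof -
    have "exp 1 \<le> real r" using exp_le r by linarith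
    then show ?thesis using r by (subst ln_ge_iff) auto
  qed
  have r1: "1 \<le> real r" using r by simp
  have "real r ^ 2 \<le> real r ^ 4" using r1 by (intro power_increasing) auto
  also have "\<dots> \<le> real r ^ 4 * ln (real r)" using ln1 r1 by (simp add: mult_le_cancel_left1)
  finally have "real r ^ 2 \<le> real r ^ 4 * ln (real r)" .
  then have "864 * real r ^ 2 \<le> 864 * real r ^ 4 * ln (real r)" by simp
  moreover have "real (2 * (16 * (3 * (2 * r + 3)^2))) \<le> 864 * real r ^ 2"
    using a by (metis of_nat_le_iff of_nat_mult of_nat_numeral of_nat_power)
  ultimately show ?thesis by linarith
qed

theorem lemma14:
  "\<exists>C::real. \<forall>r::nat. r \<ge> 10 \<longrightarrow>
     (\<exists>d::nat. real d \<le> C * real r ^ 4 * ln (real r) \<and>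
       (\<forall>k::nat. \<forall>(V::nat set) (E::nat set set) (P::gobj \<Rightarrow> nat list) (pat::gvert \<Rightarrow> pattern)
            (\<phi>::nat \<Rightarrow> nat).
          k \<ge> 1 \<longrightarrow> pseudogrid k V E P pat \<longrightarrow>
          (\<forall>A \<subseteq> \<phi> ` V. card (colpre k P \<phi> A \<inter> VEsub (intbox k r)) \<ge> d * card A) \<longrightarrow>
          (\<exists>S \<subseteq> intG k r P.
             (\<forall>\<alpha>\<in>\<phi> ` V. card ({x \<in> V. \<phi> x = \<alpha>} \<inter> S) = 2) \<and>
             (\<forall>v\<in>S. card (tbox k r P v \<inter> S) \<le> 2))))"
proof (rule exI[where x = 864], intro allI impI)
  fix r :: nat assume r: "r \<ge> 10"
  define M where "M = 3 * (2 * r + 3)^2"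
  define h where "h = 16 * M"
  define d where "d = 2 * h"
  show "\<exists>d::nat. real d \<le> 864 * real r ^ 4 * ln (real r) \<and>
       (\<forall>k::nat. \<forall>(V::nat set) (E::nat set set) (P::gobj \<Rightarrow> nat list) (pat::gvert \<Rightarrow> pattern)
            (\<phi>::nat \<Rightarrow> nat).
          k \<ge> 1 \<longrightarrow> pseudogrid k V E P pat \<longrightarrow>
          (\<forall>A \<subseteq> \<phi> ` V. card (colpre k P \<phi> A \<inter> VEsub (intbox k r)) \<ge> d * card A) \<longrightarrow>
          (\<exists>S \<subseteq> intG k r P.
             (\<forall>\<alpha>\<in>\<phi> ` V. card ({x \<in> V. \<phi> x = \<alpha>} \<inter> S) = 2) \<and>
             (\<forall>v\<in>S. card (tbox k r P v \<inter> S) \<le> 2)))"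
  proof (rule exI[where x = d], rule conjI)
    show "real d \<le> 864 * real r ^ 4 * ln (real r)" unfolding d_def h_def M_def using bound_d[OF r] .
  next
    show "\<forall>k::nat. \<forall>(V::nat set) (E::nat set set) (P::gobj \<Rightarrow> nat list) (pat::gvert \<Rightarrow> pattern)
            (\<phi>::nat \<Rightarrow> nat).
          k \<ge> 1 \<longrightarrow> pseudogrid k V E P pat \<longrightarrow>
          (\<forall>A \<subseteq> \<phi> ` V. card (colpre k P \<phi> A \<inter> VEsub (intbox k r)) \<ge> d * card A) \<longrightarrow>
          (\<exists>S \<subseteq> intG k r P.
             (\<forall>\<alpha>\<in>\<phi> ` V. card ({x \<in> V. \<phi> x = \<alpha>} \<inter> S) = 2) \<and>
             (\<forall>v\<in>S. card (tbox k r P v \<inter> S) \<le> 2))"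
    proof (intro allI impI)
    fix k V E P pat and \<phi> :: "nat \<Rightarrow> nat"
    assume k: "k \<ge> 1" and pg: "pseudogrid k V E P pat"
      and hall_cond: "\<forall>A \<subseteq> \<phi> ` V. card (colpre k P \<phi> A \<inter> VEsub (intbox k r)) \<ge> d * card A"
    have disj: "\<And>\<mu> \<nu>. \<mu> \<in> VE k \<Longrightarrow> \<nu> \<in> VE k \<Longrightarrow> \<mu> \<noteq> \<nu> \<Longrightarrow> set (P \<mu>) \<inter> set (P \<nu>) = {}"
      using pg unfolding pseudogrid_def by blast
    have Vdef: "V = (\<Union>\<mu>\<in>VE k. set (P \<mu>))" using pg unfolding pseudogrid_def by blast
    define Ob where "Ob = VEsub (intbox k r)"
    have OVE: "Ob \<subseteq> VE k" unfolding Ob_def VE_def by (rule VEsub_mono[OF intbox_grid])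
    have finO: "finite Ob" using OVE finite_VE finite_subset by blast
    define K where "K = \<phi> ` V"
    have finV: "finite V" unfolding Vdef using finite_VE by auto
    have finK: "finite K" unfolding K_def using finV by auto
    define T where "T = K \<times> {..<(2::nat)} \<times> {..<h}"
    define Sa where "Sa \<alpha> = {\<mu>\<in>Ob. \<alpha> \<in> \<phi> ` set (P \<mu>)}" for \<alpha>
    have finT: "finite T" unfolding T_def using finK by auto
    have "\<exists>g. inj_on g T \<and> (\<forall>t\<in>T. g t \<in> Sa (fst t))"
    proof (rule hall)
      show "finite T" by (rule finT)
      show "\<forall>t\<in>T. finite (Sa (fst t))" unfolding Sa_def using finO by auto
      show "\<forall>J\<subseteq>T. card J \<le> card (\<Union>((\<lambda>t. Sa (fst t)) ` J))"
      proof (intro allI impI)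
        fix J assume J: "J \<subseteq> T"
        have AK: "fst ` J \<subseteq> K" using J unfolding T_def by auto
        have finA: "finite (fst ` J)" using AK finK finite_subset by blast
        have "J \<subseteq> fst ` J \<times> {..<(2::nat)} \<times> {..<h}" using J unfolding T_def by force
        then have "card J \<le> card (fst ` J \<times> {..<(2::nat)} \<times> {..<h})"
          using finA by (intro card_mono) auto
        also have "\<dots> = d * card (fst ` J)" unfolding d_def by (simp add: card_cartesian_product)
        also have "\<dots> \<le> card (colpre k P \<phi> (fst ` J) \<inter> VEsub (intbox k r))"
          using hall_cond AK unfolding K_def by blast
        also have "colpre k P \<phi> (fst ` J) \<inter> VEsub (intbox k r) = \<Union>((\<lambda>t. Sa (fst t)) ` J)"
          using OVE unfolding colpre_def Sa_def Ob_def by auto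
        finally show "card J \<le> card (\<Union>((\<lambda>t. Sa (fst t)) ` J))" .
      qed
    qed
    then obtain g where g: "inj_on g T" "\<forall>t\<in>T. g t \<in> Sa (fst t)" by blast
    define U where "U = g ` T"
    define cls where "cls z = (fst (inv_into T g z), fst (snd (inv_into T g z)))" for z
    define I where "I = K \<times> {..<(2::nat)}"
    have UO: "U \<subseteq> Ob" using g(2) unfolding U_def Sa_def by auto
    have clsg: "cls (g t) = (fst t, fst (snd t))" if "t \<in> T" for t
      using inv_into_f_f[OF g(1) that] unfolding cls_def by simp
    have "\<exists>f. (\<forall>c\<in>I. f c \<in> U \<and> cls (f c) = c) \<and> (\<forall>c\<in>I. \<forall>c'\<in>I. c \<noteq> c' \<longrightarrow> \<not> conf k r (f c) (f c'))"
    proof (rule lll[where h = h and M = M])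
      show "finite I" unfolding I_def using finK by auto
      show "finite U" unfolding U_def using finT by auto
      show "cls ` U \<subseteq> I" unfolding U_def I_def using clsg T_def by auto
      show "\<forall>c\<in>I. card {x\<in>U. cls x = c} = h"
      proof
        fix c assume c: "c \<in> I"
        obtain \<alpha> j where cj: "c = (\<alpha>, j)" by (cases c)
        have sub: "{\<alpha>} \<times> {j} \<times> {..<h} \<subseteq> T" using c unfolding cj I_def T_def by auto
        have "{x\<in>U. cls x = c} = g ` ({\<alpha>} \<times> {j} \<times> {..<h})"
        proof
          show "{x\<in>U. cls x = c} \<subseteq> g ` ({\<alpha>} \<times> {j} \<times> {..<h})"
          proof
            fix x assume "x \<in> {x\<in>U. cls x = c}"
            then obtain t where t: "t \<in> T" "x = g t" "cls x = c" unfolding U_def by auto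
            then have "fst t = \<alpha>" "fst (snd t) = j" using clsg cj by auto
            moreover have "snd (snd t) < h" using t unfolding T_def by auto
            ultimately show "x \<in> g ` ({\<alpha>} \<times> {j} \<times> {..<h})" using t
              by (intro image_eqI[where x = t]) (auto simp: mem_Times_iff)
          qed
          show "g ` ({\<alpha>} \<times> {j} \<times> {..<h}) \<subseteq> {x\<in>U. cls x = c}"
          proof
            fix y assume "y \<in> g ` ({\<alpha>} \<times> {j} \<times> {..<h})"
            then obtain t where t: "t \<in> {\<alpha>} \<times> {j} \<times> {..<h}" "y = g t" by blast
            then have tT: "t \<in> T" using sub by blast
            have "cls y = (fst t, fst (snd t))" using clsg[OF tT] t by simp
            also have "\<dots> = c" using t cj by auto
            finally show "y \<in> {x\<in>U. cls x = c}" using tT t unfolding U_def by auto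
          qed
        qed
        moreover have "card (g ` ({\<alpha>} \<times> {j} \<times> {..<h})) = h"
          using card_image[OF inj_on_subset[OF g(1) sub]] by (simp add: card_cartesian_product)
        ultimately show "card {x\<in>U. cls x = c} = h" by simp
      qed
      show "h \<ge> 1" unfolding h_def M_def by simp
      show "\<forall>a b. conf k r a b \<longrightarrow> conf k r b a" unfolding conf_def by blast
      show "\<forall>a\<in>U. card {b\<in>U. conf k r a b} \<le> M"
      proof
        fix a assume "a \<in> U"
        then have aVE: "a \<in> VE k" using UO OVE by auto
        have "{b\<in>U. conf k r a b} \<subseteq> {\<nu>\<in>VE k. conf k r a \<nu>}" using UO OVE by auto
        then have "card {b\<in>U. conf k r a b} \<le> card {\<nu>\<in>VE k. conf k r a \<nu>}"
          using finite_VE by (intro card_mono) auto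
        then show "card {b\<in>U. conf k r a b} \<le> M" using conf_deg[OF aVE, of r] unfolding M_def by linarith
      qed
      show "16 * M \<le> h" unfolding h_def by simp
    qed
    then obtain f where fU: "\<forall>c\<in>I. f c \<in> U \<and> cls (f c) = c"
      and fconf: "\<forall>c\<in>I. \<forall>c'\<in>I. c \<noteq> c' \<longrightarrow> \<not> conf k r (f c) (f c')" by blast
    have fSa: "f c \<in> Sa (fst c)" if c: "c \<in> I" for c
    proof -
      obtain t where t: "t \<in> T" "f c = g t" using fU c unfolding U_def by auto
      have "cls (f c) = c" using fU c by auto
      then have "fst t = fst c" using clsg[OF t(1)] t(2) by auto
      then show ?thesis using g(2) t by auto
    qed
    have fO: "f c \<in> Ob" and fVE: "f c \<in> VE k" if "c \<in> I" for c using fSa[OF that] OVE unfolding Sa_def by auto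
    have fcol: "\<exists>y. y \<in> set (P (f c)) \<and> \<phi> y = fst c" if "c \<in> I" for c
      using fSa[OF that] unfolding Sa_def by auto
    define x where "x c = (SOME y. y \<in> set (P (f c)) \<and> \<phi> y = fst c)" for c
    have xP: "x c \<in> set (P (f c))" and xcol: "\<phi> (x c) = fst c" if "c \<in> I" for c
      using someI_ex[OF fcol[OF that]] unfolding x_def by auto
    have finj: "f c \<noteq> f c'" if "c \<in> I" "c' \<in> I" "c \<noteq> c'" for c c'
      using fU that by metis
    have xinj: "inj_on x I"
    proof (rule inj_onI)
      fix c c' assume c: "c \<in> I" "c' \<in> I" "x c = x c'"
      show "c = c'"
      proof (rule ccontr)
        assume "c \<noteq> c'"
        then have "set (P (f c)) \<inter> set (P (f c')) = {}" using disj fVE finj c by blast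
        then show False using xP[OF c(1)] xP[OF c(2)] c(3) by auto
      qed
    qed
    define S where "S = x ` I"
    have xV: "x c \<in> V" if "c \<in> I" for c using xP[OF that] fVE[OF that] unfolding Vdef by auto
    show "\<exists>S \<subseteq> intG k r P.
             (\<forall>\<alpha>\<in>\<phi> ` V. card ({x \<in> V. \<phi> x = \<alpha>} \<inter> S) = 2) \<and>
             (\<forall>v\<in>S. card (tbox k r P v \<inter> S) \<le> 2)"
    proof (rule exI[where x = S], intro conjI ballI)
      show "S \<subseteq> intG k r P"
        unfolding S_def intG_def using xP fO unfolding Ob_def by blast
    next
      fix \<alpha> assume \<alpha>: "\<alpha> \<in> \<phi> ` V"
      have I2: "{(\<alpha>, 0), (\<alpha>, 1)} \<subseteq> I" using \<alpha> unfolding I_def K_def by auto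
      have "{y \<in> V. \<phi> y = \<alpha>} \<inter> S = x ` {(\<alpha>, 0), (\<alpha>, 1)}"
      proof
        show "{y \<in> V. \<phi> y = \<alpha>} \<inter> S \<subseteq> x ` {(\<alpha>, 0), (\<alpha>, 1)}"
        proof
          fix y assume y: "y \<in> {y \<in> V. \<phi> y = \<alpha>} \<inter> S"
          then obtain c where c: "c \<in> I" "y = x c" unfolding S_def by auto
          then have "fst c = \<alpha>" using xcol y by auto
          moreover have "snd c < 2" using c unfolding I_def by auto
          ultimately have "c = (\<alpha>, 0) \<or> c = (\<alpha>, 1)" by (cases c) auto
          then show "y \<in> x ` {(\<alpha>, 0), (\<alpha>, 1)}" using c by auto
        qed
        show "x ` {(\<alpha>, 0), (\<alpha>, 1)} \<subseteq> {y \<in> V. \<phi> y = \<alpha>} \<inter> S"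
          using I2 xV xcol unfolding S_def by auto
      qed
      moreover have "card (x ` {(\<alpha>, 0), (\<alpha>, 1)}) = 2"
        using card_image[OF inj_on_subset[OF xinj I2]] by simp
      ultimately show "card ({y \<in> V. \<phi> y = \<alpha>} \<inter> S) = 2" by simp
    next
      fix v assume v: "v \<in> S"
      then obtain c where c: "c \<in> I" "v = x c" unfolding S_def by auto
      have the: "(THE \<mu>. \<mu> \<in> VE k \<and> v \<in> set (P \<mu>)) = f c"
      proof (rule the_equality)
        show "f c \<in> VE k \<and> v \<in> set (P (f c))" using c fVE xP by auto
        fix \<mu> assume "\<mu> \<in> VE k \<and> v \<in> set (P \<mu>)"
        then show "\<mu> = f c" using disj[of \<mu> "f c"] c fVE xP by blast
      qed
      have "tbox k r P v \<inter> S \<subseteq> {v}"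
      proof
        fix y assume y: "y \<in> tbox k r P v \<inter> S"
        then obtain c' where c': "c' \<in> I" "y = x c'" unfolding S_def by auto
        from y obtain \<nu> where \<nu>: "\<nu> \<in> VEsub (box k r (f c))" "y \<in> set (P \<nu>)"
          unfolding tbox_def the tboxo_def by auto
        have "\<nu> \<in> VE k" using \<nu>(1) VEsub_box_VE by blast
        then have "\<nu> = f c'" using disj[of \<nu> "f c'"] \<nu>(2) c' xP fVE by blast
        then have "conf k r (f c) (f c')" using \<nu>(1) unfolding conf_def by simp
        then have "c = c'" using fconf c c' by blast
        then show "y \<in> {v}" using c c' by simp
      qed
      then have "card (tbox k r P v \<inter> S) \<le> card {v}" by (intro card_mono) auto
      then show "card (tbox k r P v \<inter> S) \<le> 2" by simp
    qed
  qed
qed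
qed

end
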